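(* Let $P,\widehat P$ be transition kernels on finite $\mathcal S\times\mathcal A$, $r:\mathcal S\times\mathcal A\to[0,1]$, $n$ a positive integer, and $\pi$ a policy whose gain $\rho^\pi$ (under $P$) is a constant vector. Let $\overline h=h^\pi-(\min_sh^\pi(s))\mathbf 1$ and $\ell=\lceil\log_2\log_2(\|\overline h\|_\infty+4)\rceil$. Suppose that for some $\alpha>0$ the elementwise inequalities $$\big|(\widehat P_\pi-P_\pi)\overline h^{\circ2^k}\big|\le\sqrt{\frac{\alpha\,\mathbb V_{P_\pi}[\overline h^{\circ2^k}]}{n}}+\frac{\alpha\,2^k}{n}\big(\|\overline h\|_\infty+1\big)^{2^k}\mathbf 1$$ hold for all $k=0,\dots,\ell$. Then $$\|\widehat\rho^\pi-\rho^\pi\|_\infty\le2(\ell+1)\sqrt{\frac{\alpha(\|\overline h\|_\infty+1)}{n}}+(\ell+1)\frac{2\alpha}{n}\big(\|\overline h\|_\infty+1\big).$$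
   Context: $P_\pi(s,s')=\sum_a\pi(a|s)P(s'|s,a)$, $r_\pi(s)=\sum_a\pi(a|s)r(s,a)$. $P^\infty_\pi$ is the Cesàro limit of $P_\pi^t$; gain $\rho^\pi=P^\infty_\pi r_\pi$, bias $h^\pi=\mathrm{C\text{-}lim}_T\sum_{t<T}(P_\pi^tr_\pi-\rho^\pi)$ (Cesàro limit); $\widehat\rho^\pi=\widehat P^\infty_\pi r_\pi$ is the gain under $\widehat P$. $x^{\circ m}$ is the elementwise $m$-th power; $|\cdot|,\sqrt\cdot$ elementwise. $\mathbb V_{P_\pi}[x](s)=\sum_{s'}P_\pi(s,s')\big(x(s')-\sum_{s''}P_\pi(s,s'')x(s'')\big)^2$. *)

theory Defs
  imports "HOL-Analysis.Analysis"
begin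

(* Finite state space 's, finite action space 'a (finite types).
   A kernel P s a s' = P(s'|s,a); a policy pol s a = pol(a|s). *)

definition stoch_kernel :: "('s::finite \<Rightarrow> 'a::finite \<Rightarrow> 's \<Rightarrow> real) \<Rightarrow> bool" where
  "stoch_kernel P \<longleftrightarrow> (\<forall>s a s'. 0 \<le> P s a s') \<and> (\<forall>s a. (\<Sum>s'\<in>UNIV. P s a s') = 1)"

definition policy :: "('s::finite \<Rightarrow> 'a::finite \<Rightarrow> real) \<Rightarrow> bool" where
  "policy pol \<longleftrightarrow> (\<forall>s a. 0 \<le> pol s a) \<and> (\<forall>s. (\<Sum>a\<in>UNIV. pol s a) = 1)"

definition Ppi :: "('s::finite \<Rightarrow> 'a::finite \<Rightarrow> 's \<Rightarrow> real) \<Rightarrow> ('s \<Rightarrow> 'a \<Rightarrow> real) \<Rightarrow> 's \<Rightarrow> 's \<Rightarrow> real" where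
  "Ppi P pol s s' = (\<Sum>a\<in>UNIV. pol s a * P s a s')"

definition rpi :: "('s::finite \<Rightarrow> 'a::finite \<Rightarrow> real) \<Rightarrow> ('s \<Rightarrow> 'a \<Rightarrow> real) \<Rightarrow> 's \<Rightarrow> real" where
  "rpi r pol s = (\<Sum>a\<in>UNIV. pol s a * r s a)"

definition mvec :: "('s::finite \<Rightarrow> 's \<Rightarrow> real) \<Rightarrow> ('s \<Rightarrow> real) \<Rightarrow> 's \<Rightarrow> real" where
  "mvec M x s = (\<Sum>s'\<in>UNIV. M s s' * x s')"

fun mpow :: "('s::finite \<Rightarrow> 's \<Rightarrow> real) \<Rightarrow> nat \<Rightarrow> 's \<Rightarrow> 's \<Rightarrow> real" where
  "mpow M 0 = (\<lambda>s s'. if s = s' then 1 else 0)"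
| "mpow M (Suc t) = (\<lambda>s s'. \<Sum>u\<in>UNIV. mpow M t s u * M u s')"

definition cesaro_lim :: "(nat \<Rightarrow> real) \<Rightarrow> real" where
  "cesaro_lim x = lim (\<lambda>N. (\<Sum>t<N. x t) / real N)"

definition Pinf :: "('s::finite \<Rightarrow> 's \<Rightarrow> real) \<Rightarrow> 's \<Rightarrow> 's \<Rightarrow> real" where
  "Pinf M s s' = cesaro_lim (\<lambda>t. mpow M t s s')"

definition gain :: "('s::finite \<Rightarrow> 'a::finite \<Rightarrow> 's \<Rightarrow> real) \<Rightarrow> ('s \<Rightarrow> 'a \<Rightarrow> real) \<Rightarrow> ('s \<Rightarrow> 'a \<Rightarrow> real) \<Rightarrow> 's \<Rightarrow> real" where
  "gain P r pol = mvec (Pinf (Ppi P pol)) (rpi r pol)"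

definition bias :: "('s::finite \<Rightarrow> 'a::finite \<Rightarrow> 's \<Rightarrow> real) \<Rightarrow> ('s \<Rightarrow> 'a \<Rightarrow> real) \<Rightarrow> ('s \<Rightarrow> 'a \<Rightarrow> real) \<Rightarrow> 's \<Rightarrow> real" where
  "bias P r pol s = cesaro_lim (\<lambda>T. \<Sum>t<T. mvec (mpow (Ppi P pol) t) (rpi r pol) s - gain P r pol s)"

definition supnorm :: "('s::finite \<Rightarrow> real) \<Rightarrow> real" where
  "supnorm x = Max (range (\<lambda>s. \<bar>x s\<bar>))"

definition varP :: "('s::finite \<Rightarrow> 's \<Rightarrow> real) \<Rightarrow> ('s \<Rightarrow> real) \<Rightarrow> 's \<Rightarrow> real" where
  "varP M x s = (\<Sum>s'\<in>UNIV. M s s' * (x s' - (\<Sum>s''\<in>UNIV. M s s'' * x s''))\<^sup>2)"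

end

theory Submission
  imports Defs
begin


definition stoch :: "('s::finite \<Rightarrow> 's \<Rightarrow> real) \<Rightarrow> bool" where
  "stoch M \<longleftrightarrow> (\<forall>s s'. 0 \<le> M s s') \<and> (\<forall>s. (\<Sum>s'\<in>UNIV. M s s') = 1)"

definition mmul :: "('s::finite \<Rightarrow> 's \<Rightarrow> real) \<Rightarrow> ('s \<Rightarrow> 's \<Rightarrow> real) \<Rightarrow> 's \<Rightarrow> 's \<Rightarrow> real" where
  "mmul A B = (\<lambda>s s'. \<Sum>u\<in>UNIV. A s u * B u s')"

definition Acs :: "('s::finite \<Rightarrow> 's \<Rightarrow> real) \<Rightarrow> nat \<Rightarrow> 's \<Rightarrow> 's \<Rightarrow> real" where
  "Acs M N s s' = (\<Sum>t<N. mpow M t s s') / real N"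

declare mpow.simps(2)[simp del]

lemma if01_mult: "(if P then 1 else 0) * (x::real) = (if P then x else 0)" "x * (if P then 1 else 0) = (if P then x else 0)"
  by auto

lemma swapR: "(\<Sum>u\<in>A. (\<Sum>t\<in>I. f t u) * g u) = (\<Sum>t\<in>I. \<Sum>u\<in>A. f t u * (g u::real))"
  by (simp only: sum_distrib_right) (rule sum.swap)

lemma swapL: "(\<Sum>u\<in>A. g u * (\<Sum>t\<in>I. f t u)) = (\<Sum>t\<in>I. \<Sum>u\<in>A. (g u::real) * f t u)"
  by (simp only: sum_distrib_left) (rule sum.swap)

lemma swapS: "(\<Sum>u\<in>A. (\<Sum>t\<in>I. f t u)) = (\<Sum>t\<in>I. \<Sum>u\<in>A. f t u)"
  by (rule sum.swap)

lemma div_sum: "(\<Sum>u\<in>A. X u / c * g u) = (\<Sum>u\<in>A. X u * (g u::real)) / c"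
  by (simp add: sum_divide_distrib)

lemma div_sumL: "(\<Sum>u\<in>A. g u * (X u / c)) = (\<Sum>u\<in>A. g u * (X u::real)) / c"
  by (simp add: sum_divide_distrib)

lemma div_sum1: "(\<Sum>u\<in>A. X u / c) = (\<Sum>u\<in>A. (X u::real)) / c"
  by (simp add: sum_divide_distrib)

lemma mmul_assoc: "mmul (mmul A B) C = mmul A (mmul B C)"
  unfolding mmul_def swapR by (simp add: sum_distrib_left mult.assoc)

lemma mmul_id_right: "mmul A (mpow M 0) = A"
  unfolding mmul_def by (auto intro!: ext simp: if01_mult)

lemma mmul_id_left: "mmul (mpow M 0) A = A"
  unfolding mmul_def by (auto intro!: ext simp: if01_mult)

lemma mpow_Suc': "mpow M (Suc t) = mmul (mpow M t) M"
  by (simp add: mmul_def mpow.simps(2))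

lemma mpow_add: "mpow M (a + b) = mmul (mpow M a) (mpow M b)"
proof (induction b)
  case 0 then show ?case by (simp only: mmul_id_right add_0_right)
next
  case (Suc b)
  have "mpow M (a + Suc b) = mmul (mpow M (a+b)) M" by (simp add: mmul_def mpow.simps(2))
  also have "\<dots> = mmul (mpow M a) (mmul (mpow M b) M)" by (simp add: Suc mmul_assoc)
  also have "\<dots> = mmul (mpow M a) (mpow M (Suc b))" by (simp add: mpow_Suc')
  finally show ?case .
qed

lemma mpow_one: "mpow M 1 = M"
  using mmul_id_left[of M M] by (simp add: mpow_Suc')

lemma mpow_Suc_left: "mpow M (Suc t) = mmul M (mpow M t)"
  using mpow_add[of M 1 t] mpow_one[of M] by simp

lemma stoch_le1: "stoch M \<Longrightarrow> M s s' \<le> 1"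
  unfolding stoch_def by (metis UNIV_I finite member_le_sum)

lemma stoch_mmul: assumes "stoch A" "stoch B" shows "stoch (mmul A B)"
  unfolding stoch_def
proof safe
  fix s s' show "0 \<le> mmul A B s s'" using assms unfolding stoch_def mmul_def by (simp add: sum_nonneg)
next
  fix s
  have "(\<Sum>s'\<in>UNIV. mmul A B s s') = (\<Sum>u\<in>UNIV. A s u * (\<Sum>s'\<in>UNIV. B u s'))"
    unfolding mmul_def sum_distrib_left by (rule sum.swap)
  also have "\<dots> = 1" using assms unfolding stoch_def by simp
  finally show "(\<Sum>s'\<in>UNIV. mmul A B s s') = 1" .
qed

lemma stoch_id: "stoch (mpow M 0)"
  unfolding stoch_def by auto

lemma stoch_mpow: "stoch M \<Longrightarrow> stoch (mpow M t)"
  by (induction t) (auto simp: stoch_id[simplified] mpow_Suc' stoch_mmul)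

lemma left_mult_bound:
  assumes "stoch P" "\<And>u. \<bar>X u\<bar> \<le> c"
  shows "\<bar>\<Sum>u\<in>UNIV. P s u * X u\<bar> \<le> c"
proof -
  have P0: "0 \<le> P s u" for u using assms(1) unfolding stoch_def by blast
  have "\<bar>\<Sum>u\<in>UNIV. P s u * X u\<bar> \<le> (\<Sum>u\<in>UNIV. \<bar>P s u * X u\<bar>)" by (rule sum_abs)
  also have "\<dots> = (\<Sum>u\<in>UNIV. P s u * \<bar>X u\<bar>)" using P0 by (simp add: abs_mult)
  finally have "\<bar>\<Sum>u\<in>UNIV. P s u * X u\<bar> \<le> (\<Sum>u\<in>UNIV. P s u * \<bar>X u\<bar>)" .
  also have "\<dots> \<le> (\<Sum>u\<in>UNIV. P s u * c)"
    using assms unfolding stoch_def by (intro sum_mono mult_left_mono) auto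
  also have "\<dots> = c" using assms(1) unfolding stoch_def by (simp add: sum_distrib_right[symmetric])
  finally show ?thesis .
qed


lemma Acs_nonneg: assumes "stoch M" shows "0 \<le> Acs M N s s'"
proof -
  have "0 \<le> mpow M t s s'" for t using stoch_mpow[OF assms, of t] unfolding stoch_def by blast
  then have "0 \<le> (\<Sum>t<N. mpow M t s s')" by (simp add: sum_nonneg)
  then show ?thesis unfolding Acs_def by simp
qed

lemma stoch_Acs: assumes "stoch M" "N > 0" shows "stoch (Acs M N)"
proof -
  have rs: "(\<Sum>s'\<in>UNIV. mpow M t s s') = 1" for t s
    using stoch_mpow[OF assms(1), of t] unfolding stoch_def by blast
  have "(\<Sum>s'\<in>UNIV. Acs M N s s') = 1" for s
  proof -
    have "(\<Sum>s'\<in>UNIV. Acs M N s s') = (\<Sum>s'\<in>UNIV. \<Sum>t<N. mpow M t s s') / real N"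
      unfolding Acs_def by (rule div_sum1)
    also have "\<dots> = (\<Sum>t<N. \<Sum>s'\<in>UNIV. mpow M t s s') / real N"
      by (rule arg_cong[where f="\<lambda>x. x / real N"], rule sum.swap)
    also have "\<dots> = 1" using assms(2) by (simp only: rs) simp
    finally show ?thesis .
  qed
  then show ?thesis using Acs_nonneg[OF assms(1)] unfolding stoch_def by blast
qed

lemma Acs_le1: assumes "stoch M" shows "Acs M N s s' \<le> 1"
proof (cases "N = 0")
  case False
  then have "stoch (Acs M N)" using stoch_Acs[OF assms] by blast
  then show ?thesis by (rule stoch_le1)
qed (simp add: Acs_def)

lemma mmul_Acs_left: "mmul (Acs M N) X s s' = (\<Sum>t<N. mmul (mpow M t) X s s') / real N"
  unfolding mmul_def Acs_def div_sum swapR ..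

lemma mmul_Acs_right: "mmul X (Acs M N) s s' = (\<Sum>t<N. mmul X (mpow M t) s s') / real N"
  unfolding mmul_def Acs_def div_sumL swapL ..

lemma Acs_M_diff: "mmul (Acs M N) M s s' - Acs M N s s' = (mpow M N s s' - mpow M 0 s s') / real N"
proof -
  have "mmul (Acs M N) M s s' - Acs M N s s' = (\<Sum>t<N. mpow M (Suc t) s s' - mpow M t s s') / real N"
    unfolding mmul_Acs_left Acs_def by (simp add: mpow_Suc' sum_subtractf diff_divide_distrib)
  then show ?thesis using sum_lessThan_telescope[of "\<lambda>n. mpow M n s s'" N] by simp
qed

lemma M_Acs_diff: "mmul M (Acs M N) s s' - Acs M N s s' = (mpow M N s s' - mpow M 0 s s') / real N"
proof -
  have "mmul M (Acs M N) s s' - Acs M N s s' = (\<Sum>t<N. mpow M (Suc t) s s' - mpow M t s s') / real N"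
    unfolding mmul_Acs_right Acs_def by (simp add: mpow_Suc_left sum_subtractf diff_divide_distrib)
  then show ?thesis using sum_lessThan_telescope[of "\<lambda>n. mpow M n s s'" N] by simp
qed

lemma shift_sum_bound:
  fixes m :: "nat \<Rightarrow> real"
  assumes "\<And>j. 0 \<le> m j \<and> m j \<le> 1"
  shows "\<bar>(\<Sum>j<N. m j) - (\<Sum>j<N. m (j + t))\<bar> \<le> real t"
proof (induction t)
  case 0 then show ?case by simp
next
  case (Suc t)
  have e: "(\<Sum>j<N. m (j + Suc t)) = (\<Sum>j<N. m (j + t)) + m (N + t) - m t"
  proof -
    have a: "(\<Sum>j<Suc N. m (j + t)) = m (0 + t) + (\<Sum>j<N. m (Suc j + t))" by (rule sum.lessThan_Suc_shift)
    have b: "(\<Sum>j<N. m (j + Suc t)) = (\<Sum>j<N. m (Suc j + t))" by simp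
    have c: "(\<Sum>j<Suc N. m (j + t)) = (\<Sum>j<N. m (j + t)) + m (N + t)" by simp
    from a b c show ?thesis by simp
  qed
  have "\<bar>m (N + t) - m t\<bar> \<le> 1" using assms[of "N+t"] assms[of t] by auto
  then show ?case using Suc e by (simp add: abs_le_iff)
qed

lemma diff_to_zero: "(\<lambda>N. (mpow M N s s' - mpow M 0 s (s'::'s::finite)) / real N) \<longlonglongrightarrow> 0" if "stoch M"
proof (rule Lim_null_comparison)
  show "\<forall>\<^sub>F N in sequentially. norm ((mpow M N s s' - mpow M 0 s s') / real N) \<le> 1 / real N"
  proof (rule always_eventually, rule allI)
    fix N
    have "0 \<le> mpow M N s s'" "0 \<le> mpow M 0 s s'" using stoch_mpow[OF that] unfolding stoch_def by blast+
    moreover have "mpow M N s s' \<le> 1" "mpow M 0 s s' \<le> 1"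
      using stoch_le1[OF stoch_mpow[OF that]] by blast+
    ultimately have "\<bar>mpow M N s s' - mpow M 0 s s'\<bar> \<le> 1" by linarith
    then show "norm ((mpow M N s s' - mpow M 0 s s') / real N) \<le> 1 / real N"
      by (simp add: divide_right_mono)
  qed
  show "(\<lambda>N. 1 / real N) \<longlonglongrightarrow> 0" by (rule lim_const_over_n)
qed


lemma cesaro_exists:
  fixes M :: "'s::finite \<Rightarrow> 's \<Rightarrow> real"
  assumes M: "stoch M"
  shows "\<exists>Pi. \<forall>s s'. (\<lambda>N. Acs M N s s') \<longlonglongrightarrow> Pi s s'"
proof -
  define V :: "nat \<Rightarrow> real^('s\<times>'s)" where "V N = (\<chi> p. Acs M N (fst p) (snd p))" for N
  have "bounded (range V)"
    unfolding bounded_iff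
  proof (intro exI ballI)
    fix x assume "x \<in> range V" then obtain N where x: "x = V N" by auto
    have "norm x \<le> (\<Sum>p\<in>UNIV. \<bar>x$p\<bar>)" by (rule norm_le_l1_cart)
    also have "\<dots> \<le> (\<Sum>p\<in>(UNIV::('s\<times>'s) set). 1)"
      using Acs_nonneg[OF M] Acs_le1[OF M] by (intro sum_mono) (auto simp: x V_def)
    finally show "norm x \<le> real CARD('s\<times>'s)" by simp
  qed
  then obtain l \<phi> where \<phi>: "strict_mono \<phi>" and lim: "(V \<circ> \<phi>) \<longlonglongrightarrow> l"
    using bounded_imp_convergent_subsequence by blast
  define Pi where "Pi s s' = l $ (s,s')" for s s'
  have sub: "(\<lambda>k. Acs M (\<phi> k) s s') \<longlonglongrightarrow> Pi s s'" for s s'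
    using tendsto_vec_nth[OF lim, of "(s,s')"] by (simp add: V_def Pi_def o_def)
  have PM: "mmul Pi M s s' = Pi s s'" for s s'
  proof -
    have "(\<lambda>k. mmul (Acs M (\<phi> k)) M s s' - Acs M (\<phi> k) s s') \<longlonglongrightarrow> mmul Pi M s s' - Pi s s'"
      unfolding mmul_def by (intro tendsto_intros sub)
    moreover have "(\<lambda>k. mmul (Acs M (\<phi> k)) M s s' - Acs M (\<phi> k) s s') \<longlonglongrightarrow> 0"
      unfolding Acs_M_diff using LIMSEQ_subseq_LIMSEQ[OF diff_to_zero[OF M] \<phi>] by (simp add: o_def)
    ultimately show ?thesis using LIMSEQ_unique by fastforce
  qed
  have MP: "mmul M Pi s s' = Pi s s'" for s s'
  proof -
    have "(\<lambda>k. mmul M (Acs M (\<phi> k)) s s' - Acs M (\<phi> k) s s') \<longlonglongrightarrow> mmul M Pi s s' - Pi s s'"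
      unfolding mmul_def by (intro tendsto_intros sub)
    moreover have "(\<lambda>k. mmul M (Acs M (\<phi> k)) s s' - Acs M (\<phi> k) s s') \<longlonglongrightarrow> 0"
      unfolding M_Acs_diff using LIMSEQ_subseq_LIMSEQ[OF diff_to_zero[OF M] \<phi>] by (simp add: o_def)
    ultimately show ?thesis using LIMSEQ_unique by fastforce
  qed
  have MtP: "mmul (mpow M t) Pi = Pi" for t
  proof (induction t)
    case 0 then show ?case by (rule mmul_id_left)
  next
    case (Suc t)
    have "mmul M Pi = Pi" using MP by (auto intro!: ext)
    then show ?case using Suc by (simp add: mpow_Suc_left mmul_assoc)
  qed
  have AP: "mmul (Acs M N) Pi s s' = Pi s s'" if "N > 0" for N s s'
    unfolding mmul_Acs_left MtP using that by simp
  have est: "\<bar>Acs M N s s' - mmul (Acs M N) (Acs M K) s s'\<bar> \<le> real K / real N"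
    if "N > 0" "K > 0" for N K s s'
  proof -
    define m where "m j = mpow M j s s'" for j
    have mb: "0 \<le> m j \<and> m j \<le> 1" for j
      using stoch_mpow[OF M, of j] stoch_le1[OF stoch_mpow[OF M, of j]] unfolding m_def stoch_def by auto
    have d: "\<bar>Acs M N s s' - mmul (Acs M N) (mpow M t) s s'\<bar> \<le> real K / real N" if "t < K" for t
    proof -
      have "mmul (Acs M N) (mpow M t) s s' = (\<Sum>j<N. m (j+t)) / real N"
        unfolding mmul_Acs_left by (simp add: mpow_add m_def)
      then have "Acs M N s s' - mmul (Acs M N) (mpow M t) s s' = ((\<Sum>j<N. m j) - (\<Sum>j<N. m (j+t))) / real N"
        by (simp add: Acs_def m_def diff_divide_distrib)
      then have "\<bar>Acs M N s s' - mmul (Acs M N) (mpow M t) s s'\<bar> \<le> real t / real N"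
        using shift_sum_bound[of m N t, OF mb] by (simp add: divide_right_mono)
      also have "\<dots> \<le> real K / real N" using that by (simp add: divide_right_mono)
      finally show ?thesis .
    qed
    have "Acs M N s s' - mmul (Acs M N) (Acs M K) s s'
        = (\<Sum>t<K. Acs M N s s' - mmul (Acs M N) (mpow M t) s s') / real K"
      unfolding mmul_Acs_right[of "Acs M N"] using \<open>K > 0\<close> by (simp add: sum_subtractf diff_divide_distrib)
    also have "\<bar>\<dots>\<bar> \<le> (\<Sum>t<K. real K / real N) / real K"
    proof -
      have "\<bar>\<Sum>t<K. Acs M N s s' - mmul (Acs M N) (mpow M t) s s'\<bar> \<le> (\<Sum>t<K. real K / real N)"
        using d by (intro order_trans[OF sum_abs] sum_mono) auto
      then show ?thesis unfolding abs_divide abs_of_nat by (rule divide_right_mono) simp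
    qed
    also have "\<dots> = real K / real N" using \<open>K > 0\<close> by simp
    finally show ?thesis .
  qed
  have conv: "(\<lambda>N. Acs M N s s') \<longlonglongrightarrow> Pi s s'" for s s'
  proof (rule LIMSEQ_I)
    fix \<epsilon> :: real assume "\<epsilon> > 0"
    have "\<forall>\<^sub>F k in sequentially. \<forall>u v. \<bar>Acs M (\<phi> k) u v - Pi u v\<bar> < \<epsilon>/2"
    proof (intro eventually_all_finite)
      fix u v
      show "\<forall>\<^sub>F k in sequentially. \<bar>Acs M (\<phi> k) u v - Pi u v\<bar> < \<epsilon>/2"
        using tendstoD[OF sub[of u v], of "\<epsilon>/2"] \<open>\<epsilon> > 0\<close> by (simp add: dist_real_def)
    qed
    then obtain k0 where k0: "\<And>k. k \<ge> k0 \<Longrightarrow> \<forall>u v. \<bar>Acs M (\<phi> k) u v - Pi u v\<bar> < \<epsilon>/2"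
      unfolding eventually_sequentially by blast
    define K where "K = \<phi> (Suc k0)"
    have "K > 0" using seq_suble[OF \<phi>, of "Suc k0"] unfolding K_def by simp
    have k1: "\<forall>u v. \<bar>Acs M K u v - Pi u v\<bar> < \<epsilon>/2" using k0[of "Suc k0"] unfolding K_def by simp
    have Kb: "\<bar>Acs M K u v - Pi u v\<bar> \<le> \<epsilon>/2" for u v
      using k1 less_imp_le by blast
    obtain N0 :: nat where N0: "2 * real K / \<epsilon> < real N0" using reals_Archimedean2 by blast
    show "\<exists>no. \<forall>n\<ge>no. norm (Acs M n s s' - Pi s s') < \<epsilon>"
    proof (intro exI allI impI)
      fix N assume "N \<ge> Suc N0"
      then have "N > 0" and NN: "real N > 2 * real K / \<epsilon>" using N0 by auto
      have "2 * real K < real N * \<epsilon>" using NN \<open>\<epsilon> > 0\<close> by (simp add: pos_divide_less_eq)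
      then have "real K / real N < \<epsilon> / 2" using \<open>N > 0\<close> by (simp add: divide_less_eq mult.commute)
      have sd: "(\<Sum>u\<in>UNIV. Acs M N s u * (Acs M K u s' - Pi u s'))
          = (\<Sum>u\<in>UNIV. Acs M N s u * Acs M K u s') - (\<Sum>u\<in>UNIV. Acs M N s u * Pi u s')"
        by (simp add: right_diff_distrib sum_subtractf)
      have split: "Acs M N s s' - Pi s s' = (Acs M N s s' - mmul (Acs M N) (Acs M K) s s')
            + (\<Sum>u\<in>UNIV. Acs M N s u * (Acs M K u s' - Pi u s'))"
        using AP[OF \<open>N > 0\<close>, of s s'] sd unfolding mmul_def by linarith
      have "\<bar>\<Sum>u\<in>UNIV. Acs M N s u * (Acs M K u s' - Pi u s')\<bar> \<le> \<epsilon>/2"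
        by (rule left_mult_bound[OF stoch_Acs[OF M \<open>N > 0\<close>]]) (rule Kb)
      then show "norm (Acs M N s s' - Pi s s') < \<epsilon>"
        using est[OF \<open>N > 0\<close> \<open>K > 0\<close>, of s s'] \<open>real K / real N < \<epsilon> / 2\<close> unfolding split real_norm_def
        by linarith
    qed
  qed
  then show ?thesis by blast
qed


lemma Pinf_conv:
  fixes M :: "'s::finite \<Rightarrow> 's \<Rightarrow> real"
  assumes M: "stoch M"
  shows "(\<lambda>N. Acs M N s s') \<longlonglongrightarrow> Pinf M s s'"
proof -
  obtain Pi where Pi: "\<And>s s'. (\<lambda>N. Acs M N s s') \<longlonglongrightarrow> Pi s s'" using cesaro_exists[OF M] by blast
  have "Pinf M s s' = lim (\<lambda>N. Acs M N s s')"
    unfolding Pinf_def cesaro_lim_def Acs_def by simp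
  then show ?thesis using Pi limI by metis
qed

lemma eq_Suc_lim:
  fixes f g :: "nat \<Rightarrow> real"
  assumes "f \<longlonglongrightarrow> a" "g \<longlonglongrightarrow> b" "\<And>N. N > 0 \<Longrightarrow> f N = g N"
  shows "a = b"
proof -
  have "(\<lambda>n. f (Suc n)) \<longlonglongrightarrow> a" "(\<lambda>n. g (Suc n)) \<longlonglongrightarrow> b"
    using assms(1,2) by (auto intro: LIMSEQ_Suc)
  moreover have "(\<lambda>n. f (Suc n)) = (\<lambda>n. g (Suc n))" using assms(3) by auto
  ultimately show ?thesis using LIMSEQ_unique by metis
qed

lemma Pinf_props:
  fixes M :: "'s::finite \<Rightarrow> 's \<Rightarrow> real"
  assumes M: "stoch M"
  shows "stoch (Pinf M)" "mmul (Pinf M) M = Pinf M" "mmul M (Pinf M) = Pinf M"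
    "mmul (Pinf M) (Pinf M) = Pinf M"
proof -
  note conv = Pinf_conv[OF M]
  have "0 \<le> Pinf M s s'" for s s'
    using conv[of s s'] Acs_nonneg[OF M] by (intro LIMSEQ_le_const) auto
  moreover have "(\<Sum>s'\<in>UNIV. Pinf M s s') = 1" for s
  proof (rule eq_Suc_lim)
    show "(\<lambda>N. \<Sum>s'\<in>UNIV. Acs M N s s') \<longlonglongrightarrow> (\<Sum>s'\<in>UNIV. Pinf M s s')"
      by (rule tendsto_sum, rule conv)
    show "(\<lambda>_. 1) \<longlonglongrightarrow> (1::real)" by (rule tendsto_const)
    show "(\<Sum>s'\<in>UNIV. Acs M N s s') = 1" if "N > 0" for N
      using stoch_Acs[OF M that] unfolding stoch_def by blast
  qed
  ultimately show "stoch (Pinf M)" unfolding stoch_def by auto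
  show PM: "mmul (Pinf M) M = Pinf M"
  proof (intro ext)
    fix s s'
    have "(\<lambda>N. mmul (Acs M N) M s s' - Acs M N s s') \<longlonglongrightarrow> mmul (Pinf M) M s s' - Pinf M s s'"
      unfolding mmul_def by (intro tendsto_intros conv)
    moreover have "(\<lambda>N. mmul (Acs M N) M s s' - Acs M N s s') \<longlonglongrightarrow> 0"
      unfolding Acs_M_diff using diff_to_zero[OF M] .
    ultimately show "mmul (Pinf M) M s s' = Pinf M s s'" using LIMSEQ_unique by fastforce
  qed
  show MP: "mmul M (Pinf M) = Pinf M"
  proof (intro ext)
    fix s s'
    have "(\<lambda>N. mmul M (Acs M N) s s' - Acs M N s s') \<longlonglongrightarrow> mmul M (Pinf M) s s' - Pinf M s s'"
      unfolding mmul_def by (intro tendsto_intros conv)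
    moreover have "(\<lambda>N. mmul M (Acs M N) s s' - Acs M N s s') \<longlonglongrightarrow> 0"
      unfolding M_Acs_diff using diff_to_zero[OF M] .
    ultimately show "mmul M (Pinf M) s s' = Pinf M s s'" using LIMSEQ_unique by fastforce
  qed
  have PMt: "mmul (Pinf M) (mpow M t) = Pinf M" for t
  proof (induction t)
    case 0 then show ?case by (rule mmul_id_right)
  next
    case (Suc t) then show ?case using PM by (simp add: mpow_Suc' mmul_assoc[symmetric])
  qed
  show "mmul (Pinf M) (Pinf M) = Pinf M"
  proof (intro ext)
    fix s s'
    have L1: "(\<lambda>N. mmul (Pinf M) (Acs M N) s s') \<longlonglongrightarrow> mmul (Pinf M) (Pinf M) s s'"
      unfolding mmul_def by (intro tendsto_intros conv)
    have E: "mmul (Pinf M) (Acs M N) s s' = Pinf M s s'" if "N > 0" for N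
      unfolding mmul_Acs_right PMt using that by simp
    show "mmul (Pinf M) (Pinf M) s s' = Pinf M s s'"
      by (rule eq_Suc_lim[OF L1 tendsto_const E])
  qed
qed

lemma mpow_Pinf:
  fixes M :: "'s::finite \<Rightarrow> 's \<Rightarrow> real"
  assumes M: "stoch M"
  shows "mmul (mpow M t) (Pinf M) = Pinf M" "mmul (Pinf M) (mpow M t) = Pinf M"
proof -
  show "mmul (mpow M t) (Pinf M) = Pinf M"
  proof (induction t)
    case 0 then show ?case by (rule mmul_id_left)
  next
    case (Suc t) then show ?case using Pinf_props(3)[OF M] by (simp add: mpow_Suc_left mmul_assoc)
  qed
  show "mmul (Pinf M) (mpow M t) = Pinf M"
  proof (induction t)
    case 0 then show ?case by (rule mmul_id_right)
  next
    case (Suc t) then show ?case using Pinf_props(2)[OF M] by (simp add: mpow_Suc' mmul_assoc[symmetric])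
  qed
qed


lemma mvec_assoc: "mvec A (mvec B x) = mvec (mmul A B) x"
  unfolding mvec_def mmul_def swapR by (simp add: sum_distrib_left mult.assoc)

lemma mvec_diff: "mvec A (\<lambda>u. x u - y u) s = mvec A x s - mvec A y s"
  unfolding mvec_def by (simp add: right_diff_distrib sum_subtractf)

lemma mvec_sum: "mvec A (\<lambda>u. \<Sum>t\<in>I. f t u) s = (\<Sum>t\<in>I. mvec A (f t) s)"
  unfolding mvec_def swapL ..

lemma mvec_div: "mvec A (\<lambda>u. x u / c) s = mvec A x s / c"
  unfolding mvec_def by (simp add: sum_divide_distrib)

lemma mvec_const: "stoch A \<Longrightarrow> mvec A (\<lambda>u. c) s = c"
  unfolding mvec_def stoch_def by (simp add: sum_distrib_right[symmetric])

lemma mvec_id: "mvec (mpow M 0) x = x"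
  unfolding mvec_def by (auto simp: if01_mult intro!: ext)

lemma mvec_Acs: "mvec (Acs M N) x s = (\<Sum>t<N. mvec (mpow M t) x s) / real N"
  unfolding mvec_def Acs_def div_sum swapR ..

lemma poisson:
  fixes M :: "'s::finite \<Rightarrow> 's \<Rightarrow> real" and r :: "'s \<Rightarrow> real"
  assumes M: "stoch M"
  defines "\<rho> \<equiv> mvec (Pinf M) r"
  defines "h \<equiv> \<lambda>s. cesaro_lim (\<lambda>T. \<Sum>t<T. mvec (mpow M t) r s - \<rho> s)"
  shows "\<rho> s + h s = r s + mvec M h s"
proof -
  define Pi where "Pi = Pinf M"
  define S where "S T s = (\<Sum>t<T. mvec (mpow M t) r s - \<rho> s)" for T s
  define C where "C N s = (\<Sum>T<N. S T s) / real N" for N s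
  have hC: "h s = lim (\<lambda>N. C N s)" for s unfolding h_def cesaro_lim_def C_def S_def ..
  have stPi: "stoch Pi" using Pinf_props[OF M] unfolding Pi_def by simp
  have Mrho: "mvec M \<rho> = \<rho>" unfolding \<rho>_def mvec_assoc Pinf_props(3)[OF M] ..
  have Pirho: "mvec Pi \<rho> = \<rho>" unfolding \<rho>_def Pi_def mvec_assoc Pinf_props(4)[OF M] ..
  have PiMt: "mvec Pi (mvec (mpow M t) x) = mvec Pi x" for t x
    unfolding Pi_def mvec_assoc mpow_Pinf(2)[OF M] ..
  have MMt: "mvec M (mvec (mpow M t) x) = mvec (mpow M (Suc t)) x" for t x
    unfolding mvec_assoc mpow_Suc_left ..
  have Acs_conv: "(\<lambda>N. mvec (Acs M N) x s) \<longlonglongrightarrow> mvec Pi x s" for x s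
    unfolding mvec_def Pi_def by (intro tendsto_intros Pinf_conv[OF M])
  have DS: "S T s - mvec M (S T) s + mvec Pi (S T) s = r s - mvec (mpow M T) r s" for T s
  proof -
    have "mvec M (S T) s = (\<Sum>t<T. mvec (mpow M (Suc t)) r s - \<rho> s)"
      unfolding S_def mvec_sum mvec_diff MMt using Mrho by (simp add: fun_eq_iff)
    moreover have "mvec Pi (S T) s = 0"
      unfolding S_def mvec_sum mvec_diff PiMt using Pirho by (simp add: \<rho>_def Pi_def)
    moreover have "(\<Sum>t<T. mvec (mpow M t) r s - \<rho> s) - (\<Sum>t<T. mvec (mpow M (Suc t)) r s - \<rho> s)
        = (\<Sum>t<T. mvec (mpow M t) r s - mvec (mpow M (Suc t)) r s)"
      by (simp add: sum_subtractf)
    moreover have "\<dots> = r s - mvec (mpow M T) r s"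
      using sum_lessThan_telescope'[of "\<lambda>t. mvec (mpow M t) r s" T] by (simp add: mvec_id[simplified])
    ultimately show ?thesis unfolding S_def by linarith
  qed
  have DC: "C N s - mvec M (C N) s + mvec Pi (C N) s = r s - mvec (Acs M N) r s" if "N > 0" for N s
  proof -
    have "C N s - mvec M (C N) s + mvec Pi (C N) s
        = (\<Sum>T<N. S T s - mvec M (S T) s + mvec Pi (S T) s) / real N"
      unfolding C_def mvec_div mvec_sum by (simp add: sum.distrib sum_subtractf add_divide_distrib diff_divide_distrib)
    also have "\<dots> = (\<Sum>T<N. r s - mvec (mpow M T) r s) / real N" unfolding DS ..
    also have "\<dots> = r s - mvec (Acs M N) r s"
      unfolding mvec_Acs using that by (simp add: sum_subtractf diff_divide_distrib)
    finally show ?thesis .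
  qed
  have inj0: "z = (\<lambda>_. 0)" if z: "\<And>j. z j - mvec M z j + mvec Pi z j = 0" for z
  proof -
    have "mvec Pi (\<lambda>j. z j - mvec M z j + mvec Pi z j) s = 0" for s using z by (simp add: mvec_def)
    moreover have "mvec Pi (\<lambda>j. z j - mvec M z j + mvec Pi z j) s = mvec Pi z s" for s
    proof -
      have "mvec Pi (\<lambda>j. z j - mvec M z j + mvec Pi z j) s = mvec Pi z s - mvec Pi (mvec M z) s + mvec Pi (mvec Pi z) s"
        unfolding mvec_def by (simp add: distrib_left right_diff_distrib sum.distrib sum_subtractf)
      moreover have "mvec Pi (mvec M z) = mvec Pi z" using PiMt[of 1 z] unfolding mpow_one .
      moreover have "mvec Pi (mvec Pi z) = mvec Pi z"
        unfolding Pi_def mvec_assoc Pinf_props(4)[OF M] ..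
      ultimately show ?thesis by simp
    qed
    ultimately have Pz: "mvec Pi z s = 0" for s by simp
    have Mz: "mvec M z = z" using z Pz by (auto intro!: ext simp: algebra_simps)
    have Mtz: "mvec (mpow M t) z = z" for t
    proof (induction t)
      case 0 then show ?case by (rule mvec_id)
    next
      case (Suc t) then show ?case using Mz by (simp add: mpow_Suc' mvec_assoc[symmetric])
    qed
    have "z s = 0" for s
    proof (rule eq_Suc_lim[of "\<lambda>_. z s" _ "\<lambda>N. mvec (Acs M N) z s"])
      show "(\<lambda>N. mvec (Acs M N) z s) \<longlonglongrightarrow> 0" using Acs_conv[of z s] Pz by simp
      show "(\<lambda>_. z s) \<longlonglongrightarrow> z s" by simp
      show "z s = mvec (Acs M N) z s" if "N > 0" for N unfolding mvec_Acs Mtz using that by simp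
    qed
    then show ?thesis by auto
  qed
  define Dm :: "real^'s^'s" where "Dm = (\<chi> i k. (if i = k then 1 else 0) - M i k + Pi i k)"
  have Dmv: "(Dm *v x) $ j = x $ j - mvec M (($) x) j + mvec Pi (($) x) j" for x j
    unfolding Dm_def matrix_vector_mult_def mvec_def
    by (simp add: left_diff_distrib distrib_right sum.distrib sum_subtractf if01_mult)
  have "inj ((*v) Dm)"
  proof (rule injI)
    fix x y assume "Dm *v x = Dm *v y"
    then have eqj: "(Dm *v x) $ j = (Dm *v y) $ j" for j by simp
    have "(\<lambda>j. x$j - y$j) j - mvec M (\<lambda>j. x$j - y$j) j + mvec Pi (\<lambda>j. x$j - y$j) j = 0" for j
      using eqj[of j] unfolding Dmv mvec_diff by linarith
    then have "(\<lambda>j. x$j - y$j) = (\<lambda>_. 0)" by (rule inj0)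
    then show "x = y" by (simp add: vec_eq_iff fun_eq_iff)
  qed
  then obtain B where B: "B ** Dm = mat 1" using matrix_left_invertible_injective by blast
  have Binv: "c s = (\<Sum>j\<in>UNIV. B$s$j * (c j - mvec M c j + mvec Pi c j))" for c s
  proof -
    have "B *v (Dm *v vec_lambda c) = vec_lambda c"
      by (simp add: matrix_vector_mul_assoc B matrix_vector_mul_lid)
    then have "(B *v (Dm *v vec_lambda c)) $ s = c s" by simp
    moreover have "(B *v w) $ s = (\<Sum>j\<in>UNIV. B$s$j * w$j)" for w :: "real^'s"
      by (simp add: matrix_vector_mult_def)
    moreover have "(Dm *v vec_lambda c) $ j = c j - mvec M c j + mvec Pi c j" for j
    proof -
      have "(($) (vec_lambda c)) = c" by (rule ext) simp
      then show ?thesis using Dmv[of "vec_lambda c" j] by simp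
    qed
    ultimately show ?thesis by simp
  qed
  have Cconv: "(\<lambda>N. C N s) \<longlonglongrightarrow> (\<Sum>j\<in>UNIV. B$s$j * (r j - mvec Pi r j))" for s
  proof -
    have "(\<lambda>N. (\<Sum>j\<in>UNIV. B$s$j * (r j - mvec (Acs M N) r j))) \<longlonglongrightarrow> (\<Sum>j\<in>UNIV. B$s$j * (r j - mvec Pi r j))"
      by (intro tendsto_intros Acs_conv)
    moreover have "(\<lambda>N. C (Suc N) s) = (\<lambda>N. (\<Sum>j\<in>UNIV. B$s$j * (r j - mvec (Acs M (Suc N)) r j)))"
      using Binv[of "C (Suc _)" s] DC by (auto intro!: ext)
    ultimately have "(\<lambda>N. C (Suc N) s) \<longlonglongrightarrow> (\<Sum>j\<in>UNIV. B$s$j * (r j - mvec Pi r j))"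
      using LIMSEQ_Suc[of "\<lambda>N. (\<Sum>j\<in>UNIV. B$s$j * (r j - mvec (Acs M N) r j))"] by simp
    then show ?thesis by (rule LIMSEQ_imp_Suc)
  qed
  then have hlim: "(\<lambda>N. C N s) \<longlonglongrightarrow> h s" for s unfolding hC by (metis limI)
  have SSuc: "S (Suc T) s = r s - \<rho> s + mvec M (S T) s" for T s
  proof -
    have "S (Suc T) s = (mvec (mpow M 0) r s - \<rho> s) + (\<Sum>t<T. mvec (mpow M (Suc t)) r s - \<rho> s)"
      unfolding S_def by (rule sum.lessThan_Suc_shift)
    moreover have "mvec M (S T) s = (\<Sum>t<T. mvec (mpow M (Suc t)) r s - \<rho> s)"
      unfolding S_def mvec_sum mvec_diff MMt using Mrho by (simp add: fun_eq_iff)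
    ultimately show ?thesis by (simp add: mvec_id[simplified])
  qed
  have key: "C N s + (mvec (Acs M N) r s - \<rho> s) = r s - \<rho> s + mvec M (C N) s" if "N > 0" for N s
  proof -
    have "(\<Sum>T<Suc N. S T s) = S 0 s + (\<Sum>T<N. S (Suc T) s)" by (rule sum.lessThan_Suc_shift)
    moreover have "(\<Sum>T<Suc N. S T s) = (\<Sum>T<N. S T s) + S N s" by simp
    moreover have "S 0 s = 0" by (simp add: S_def)
    ultimately have e1: "(\<Sum>T<N. S (Suc T) s) = (\<Sum>T<N. S T s) + S N s" by simp
    have "(\<Sum>T<N. S (Suc T) s) = real N * (r s - \<rho> s) + (\<Sum>T<N. mvec M (S T) s)"
      unfolding SSuc by (simp add: sum.distrib)
    moreover have "S N s / real N = mvec (Acs M N) r s - \<rho> s"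
      unfolding S_def mvec_Acs using that by (simp add: sum_subtractf diff_divide_distrib)
    moreover have "mvec M (C N) s = (\<Sum>T<N. mvec M (S T) s) / real N"
      unfolding C_def mvec_div mvec_sum ..
    ultimately show ?thesis using e1 that unfolding C_def by (simp add: field_simps)
  qed
  have "(\<lambda>N. C N s + (mvec (Acs M N) r s - \<rho> s)) \<longlonglongrightarrow> h s + (mvec Pi r s - \<rho> s)"
    by (intro tendsto_intros hlim Acs_conv)
  moreover have "(\<lambda>N. r s - \<rho> s + mvec M (C N) s) \<longlonglongrightarrow> r s - \<rho> s + mvec M h s"
    unfolding mvec_def by (intro tendsto_intros hlim)
  ultimately have "h s + (mvec Pi r s - \<rho> s) = r s - \<rho> s + mvec M h s"
    using key by (rule eq_Suc_lim)
  then show ?thesis by (simp add: \<rho>_def Pi_def)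
qed



lemma jensen_sq:
  fixes p y :: "'s::finite \<Rightarrow> real"
  assumes p0: "\<And>j. 0 \<le> p j" and p1: "(\<Sum>j\<in>UNIV. p j) = 1"
  shows "(\<Sum>j\<in>UNIV. p j * y j)^2 \<le> (\<Sum>j\<in>UNIV. p j * (y j)^2)"
proof -
  define \<mu> where "\<mu> = (\<Sum>j\<in>UNIV. p j * y j)"
  have "(\<Sum>j\<in>UNIV. p j * (y j - \<mu>)^2) = (\<Sum>j\<in>UNIV. p j * (y j)^2 - 2 * \<mu> * (p j * y j) + \<mu>^2 * p j)"
    by (rule sum.cong) (auto simp: power2_diff algebra_simps)
  also have "\<dots> = (\<Sum>j\<in>UNIV. p j * (y j)^2) - 2 * \<mu> * \<mu> + \<mu>^2 * 1"
    unfolding sum.distrib sum_subtractf sum_distrib_left[symmetric] p1 \<mu>_def ..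
  finally have "(\<Sum>j\<in>UNIV. p j * (y j - \<mu>)^2) = (\<Sum>j\<in>UNIV. p j * (y j)^2) - \<mu>^2"
    by (simp add: power2_eq_square)
  moreover have "0 \<le> (\<Sum>j\<in>UNIV. p j * (y j - \<mu>)^2)" using p0 by (intro sum_nonneg) simp
  ultimately show ?thesis unfolding \<mu>_def by linarith
qed

lemma jensen_sqrt:
  fixes p z :: "'s::finite \<Rightarrow> real"
  assumes p0: "\<And>j. 0 \<le> p j" and p1: "(\<Sum>j\<in>UNIV. p j) = 1" and z0: "\<And>j. 0 \<le> z j"
  shows "(\<Sum>j\<in>UNIV. p j * sqrt (z j)) \<le> sqrt (\<Sum>j\<in>UNIV. p j * z j)"
proof (rule real_le_rsqrt)
  have "(\<Sum>j\<in>UNIV. p j * sqrt (z j))^2 \<le> (\<Sum>j\<in>UNIV. p j * (sqrt (z j))^2)"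
    by (rule jensen_sq[OF p0 p1])
  also have "\<dots> = (\<Sum>j\<in>UNIV. p j * z j)" using z0 by simp
  finally show "(\<Sum>j\<in>UNIV. p j * sqrt (z j))^2 \<le> (\<Sum>j\<in>UNIV. p j * z j)" .
qed

lemma jensen_pow:
  fixes p y :: "'s::finite \<Rightarrow> real"
  assumes p0: "\<And>j. 0 \<le> p j" and p1: "(\<Sum>j\<in>UNIV. p j) = 1" and y0: "\<And>j. 0 \<le> y j"
  shows "(\<Sum>j\<in>UNIV. p j * y j)^(2^k) \<le> (\<Sum>j\<in>UNIV. p j * (y j)^(2^k))"
proof (induction k)
  case 0 then show ?case by simp
next
  case (Suc k)
  have nn: "0 \<le> (\<Sum>j\<in>UNIV. p j * y j)" using p0 y0 by (intro sum_nonneg) simp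
  have "(\<Sum>j\<in>UNIV. p j * y j)^(2^Suc k) = ((\<Sum>j\<in>UNIV. p j * y j)^(2^k))^2"
    by (simp add: power_mult[symmetric] mult.commute)
  also have "\<dots> \<le> (\<Sum>j\<in>UNIV. p j * (y j)^(2^k))^2"
    using Suc nn by (intro power_mono) simp_all
  also have "\<dots> \<le> (\<Sum>j\<in>UNIV. p j * ((y j)^(2^k))^2)" by (rule jensen_sq[OF p0 p1])
  also have "\<dots> = (\<Sum>j\<in>UNIV. p j * (y j)^(2^Suc k))"
    by (simp add: power_mult[symmetric] mult.commute)
  finally show ?case .
qed

lemma pow_diff:
  fixes a b :: real
  assumes "0 \<le> b" "b \<le> a"
  shows "a^m - b^m \<le> real m * a^(m-1) * (a - b)"
proof (induction m)
  case 0 then show ?case by simp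
next
  case (Suc m)
  have a0: "0 \<le> a" using assms by linarith
  have e: "a * (real m * a^(m-1) * (a - b)) = real m * a^m * (a - b)"
    by (cases m) (simp_all add: algebra_simps)
  have "a^Suc m - b^Suc m = a * (a^m - b^m) + b^m * (a - b)" by (simp add: algebra_simps)
  also have "\<dots> \<le> a * (real m * a^(m-1) * (a - b)) + a^m * (a - b)"
    using Suc a0 assms by (intro add_mono mult_left_mono mult_right_mono power_mono) simp_all
  also have "\<dots> = real (Suc m) * a^(Suc m - 1) * (a - b)" unfolding e by (simp add: algebra_simps)
  finally show ?case .
qed

lemma pow_diff_bound:
  fixes a b H :: real
  assumes "0 \<le> a" "a \<le> H" "0 \<le> b" "a - b \<le> 1"
  shows "a^m - b^m \<le> real m * H^(m-1)"
proof (cases "a \<le> b")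
  case True
  then have "a^m \<le> b^m" using assms by (intro power_mono) simp_all
  moreover have "0 \<le> real m * H^(m-1)" using assms by simp
  ultimately show ?thesis by linarith
next
  case False
  then have "a^m - b^m \<le> real m * a^(m-1) * (a - b)" using assms by (intro pow_diff) simp_all
  also have "\<dots> \<le> real m * H^(m-1) * 1"
    using assms False by (intro mult_mono power_mono) simp_all
  finally show ?thesis by simp
qed

lemma pow_superadd:
  fixes a b :: real
  assumes "0 \<le> a" "0 \<le> b"
  shows "a^Suc m + b^Suc m \<le> (a + b)^Suc m"
proof (induction m)
  case 0 then show ?case by simp
next
  case (Suc m)
  have "a^Suc (Suc m) + b^Suc (Suc m) \<le> (a + b) * (a^Suc m + b^Suc m)"
    using assms by (simp add: algebra_simps)
  also have "\<dots> \<le> (a + b) * (a + b)^Suc m"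
    using Suc assms by (intro mult_left_mono) simp_all
  finally show ?case by simp
qed


lemma xdelta:
  fixes x :: real assumes x0: "0 < x" and x1: "x < 1/4" and k: "k \<ge> 1"
  shows "2^(2^k) \<le> x * (2 / sqrt x + 2)^(2^k)"
proof -
  obtain k' where k': "k = Suc k'" using k by (cases k) auto
  have sx: "0 < sqrt x" using x0 by simp
  have "(sqrt x)^(2^k) = ((sqrt x)^2)^(2^k')"
    unfolding k' power_mult[symmetric] by simp
  also have "\<dots> = x^(2^k')" using x0 by simp
  finally have "(sqrt x)^(2^k) = x^(2^k')" .
  then have e: "(2 / sqrt x)^(2^k) = 2^(2^k) / x^(2^k')" by (simp add: power_divide)
  have "x^(2^k') \<le> x^1" using x0 x1 by (intro power_decreasing) simp_all
  then have xx: "x^(2^k') \<le> x" by simp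
  have "(2::real)^(2^k) = x * (2^(2^k) / x)" using x0 by simp
  also have "\<dots> \<le> x * (2^(2^k) / x^(2^k'))"
    using x0 xx by (intro mult_left_mono divide_left_mono) simp_all
  also have "\<dots> = x * (2 / sqrt x)^(2^k)" unfolding e ..
  also have "\<dots> \<le> x * (2 / sqrt x + 2)^(2^k)"
    using x0 sx by (intro mult_left_mono power_mono) simp_all
  finally show ?thesis .
qed

lemma small_terms:
  fixes x :: real assumes x0: "0 < x" and x1: "x < 1/4"
  shows "sqrt (2 * 2^k * x) + 2^k * x \<le> x * (2 / sqrt x + 2)^(2^k)"
proof (cases "k = 0")
  case True
  have "x * (2 / sqrt x + 2) = 2 * (x / sqrt x) + 2 * x" by (simp add: algebra_simps)
  also have "x / sqrt x = sqrt x" using x0 by (intro real_div_sqrt) simp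
  finally have "x * (2 / sqrt x + 2) = 2 * sqrt x + 2 * x" .
  moreover have "sqrt (2 * x) \<le> 2 * sqrt x"
  proof -
    have "sqrt (2 * x) = sqrt 2 * sqrt x" by (simp add: real_sqrt_mult)
    moreover have "sqrt 2 \<le> (2::real)" by (rule real_le_lsqrt) simp_all
    ultimately show ?thesis using x0 by (simp add: mult_right_mono)
  qed
  ultimately show ?thesis using True x0 by simp
next
  case False
  define m :: real where "m = 2^k"
  have m1: "m \<ge> 1" unfolding m_def by simp
  have "sqrt (2 * m * x) \<le> m"
  proof (rule real_le_lsqrt)
    show "0 \<le> m" using m1 by simp
    have "2 * m * x \<le> 2 * m * (1/4)" using x0 x1 m1 by (intro mult_left_mono) simp_all
    also have "\<dots> \<le> m^2" using m1 by (simp add: power2_eq_square)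
    finally show "2 * m * x \<le> m^2" .
  qed
  moreover have "m * x \<le> m" using x0 x1 m1 by (simp add: mult_left_le)
  ultimately have "sqrt (2 * m * x) + m * x \<le> 2 * m" by linarith
  also have "2 * m = 2^(Suc k)" unfolding m_def by simp
  also have "\<dots> \<le> 2^(2^k)"
  proof (rule power_increasing)
    have "k < 2^k" by (rule less_exp)
    then show "Suc k \<le> 2^k" by (rule Suc_leI)
  qed simp
  also have "\<dots> \<le> x * (2 / sqrt x + 2)^(2^k)" using False x0 x1 by (intro xdelta) simp_all
  finally show ?thesis unfolding m_def .
qed


lemma recursion_final:
  fixes e :: "nat \<Rightarrow> real" and A Hp :: real and ell :: nat
  assumes A: "A > 0" and Hp: "Hp \<ge> 1" and xs: "A * Hp < 1/4" and ell: "ell \<ge> 1"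
    and Hpb: "Hp \<le> 2^(2^ell)"
    and base: "e ell \<le> Hp^(2^ell)"
    and step: "\<And>k. k < ell \<Longrightarrow> e k \<le> sqrt (A * (e (Suc k) + 2^(Suc k) * Hp^(2^(Suc k) - 1))) + A * 2^k * Hp^(2^k)"
  shows "e 0 \<le> real (ell+1) * (2 * sqrt (A * Hp) + 2 * (A * Hp))"
proof -
  define x where "x = A * Hp"
  define \<delta> where "\<delta> = 2 / sqrt x + 2"
  have x0: "0 < x" unfolding x_def using A Hp by simp
  have x1: "x < 1/4" unfolding x_def using xs .
  have d0: "0 \<le> \<delta>" unfolding \<delta>_def using x0 by simp
  have claim: "e (ell - j) \<le> Hp^(2^(ell-j) - 1) * x * (real (j+1) * \<delta>)^(2^(ell-j))" if "j \<le> ell" for j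
    using that
  proof (induction j)
    case 0
    have "Hp \<le> 2^(2^ell)" by (rule Hpb)
    also have "\<dots> \<le> x * \<delta>^(2^ell)" unfolding \<delta>_def using x0 x1 ell by (intro xdelta) simp_all
    finally have h1: "Hp \<le> x * \<delta>^(2^ell)" .
    have "e ell \<le> Hp^(2^ell)" by (rule base)
    also have "\<dots> = Hp^(2^ell - 1) * Hp" by (simp add: power_Suc2[symmetric] del: power_Suc)
    also have "\<dots> \<le> Hp^(2^ell - 1) * (x * \<delta>^(2^ell))" using h1 Hp by (intro mult_left_mono) simp_all
    finally show ?case by (simp add: mult.assoc)
  next
    case (Suc j)
    define k where "k = ell - Suc j"
    have kl: "k < ell" and kS: "ell - j = Suc k" using Suc.prems unfolding k_def by auto
    define m :: nat where "m = 2^k"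
    have m1: "m \<ge> 1" unfolding m_def by simp
    have m2: "2^(Suc k) = 2 * m" unfolding m_def by simp
    have m2r: "(2::real)^(Suc k) = 2 * real m" unfolding m_def by simp
    define Y where "Y = real (j+1) * \<delta>"
    have Y0: "0 \<le> Y" unfolding Y_def using d0 by simp
    have IH: "e (Suc k) \<le> Hp^(2*m - 1) * x * Y^(2*m)"
      using Suc.IH Suc.prems m2 unfolding kS Y_def by simp
    have Hpm: "Hp^(2*m - 1) = (Hp^(m-1))^2 * Hp"
    proof -
      have eq: "2*m - 1 = (m-1) + (m-1) + 1" using m1 by simp
      have "Hp^(2*m - 1) = Hp^((m-1) + (m-1) + 1)" by (simp only: eq)
      also have "\<dots> = (Hp^(m-1))^2 * Hp" by (simp only: power_add power2_eq_square power_one_right)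
      finally show ?thesis .
    qed
    have Hpm': "Hp^m = Hp^(m-1) * Hp"
    proof -
      have "m = (m-1) + 1" using m1 by simp
      then show ?thesis by (metis power_add power_one_right)
    qed
    have HH: "0 \<le> Hp^(m-1)" using Hp by simp
    have "A * (e (Suc k) + 2^(Suc k) * Hp^(2^(Suc k) - 1))
        \<le> A * (Hp^(2*m - 1) * x * Y^(2*m) + 2 * m * Hp^(2*m - 1))"
      using IH A unfolding m2 m2r by (intro mult_left_mono add_mono) simp_all
    also have "\<dots> = (Hp^(m-1))^2 * ((x * Y^m)^2 + 2 * m * x)"
    proof -
      have Y2: "Y^(2*m) = (Y^m)^2" by (simp only: mult.commute[of 2 m] power_mult)
      show ?thesis unfolding Hpm Y2 x_def power2_eq_square by (simp add: algebra_simps)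
    qed
    finally have T: "A * (e (Suc k) + 2^(Suc k) * Hp^(2^(Suc k) - 1)) \<le> (Hp^(m-1))^2 * ((x * Y^m)^2 + 2 * m * x)" .
    have "sqrt (A * (e (Suc k) + 2^(Suc k) * Hp^(2^(Suc k) - 1))) \<le> sqrt ((Hp^(m-1))^2 * ((x * Y^m)^2 + 2 * m * x))"
      using T by (rule real_sqrt_le_mono)
    also have "\<dots> = Hp^(m-1) * sqrt ((x * Y^m)^2 + 2 * m * x)"
      using HH by (simp add: real_sqrt_mult)
    also have "\<dots> \<le> Hp^(m-1) * (x * Y^m + sqrt (2 * m * x))"
    proof (rule mult_left_mono[OF _ HH])
      have "sqrt ((x * Y^m)^2 + 2 * m * x) \<le> sqrt ((x * Y^m)^2) + sqrt (2 * m * x)"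
        using x0 by (intro sqrt_add_le_add_sqrt) simp_all
      also have "sqrt ((x * Y^m)^2) = x * Y^m" using x0 Y0 by simp
      finally show "sqrt ((x * Y^m)^2 + 2 * m * x) \<le> x * Y^m + sqrt (2 * m * x)" .
    qed
    finally have s1: "sqrt (A * (e (Suc k) + 2^(Suc k) * Hp^(2^(Suc k) - 1))) \<le> Hp^(m-1) * (x * Y^m + sqrt (2 * m * x))" .
    have s2: "A * 2^k * Hp^(2^k) = Hp^(m-1) * (m * x)"
      unfolding m_def[symmetric] x_def Hpm' by (simp add: m_def algebra_simps)
    have st: "sqrt (2 * m * x) + m * x \<le> x * \<delta>^m"
      unfolding m_def \<delta>_def using small_terms[OF x0 x1, of k] by simp
    have "e k \<le> Hp^(m-1) * (x * Y^m + sqrt (2 * m * x)) + Hp^(m-1) * (m * x)"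
      using step[OF kl] s1 s2 by linarith
    also have "\<dots> = Hp^(m-1) * (x * Y^m + (sqrt (2 * m * x) + m * x))" by (simp add: algebra_simps)
    also have "\<dots> \<le> Hp^(m-1) * (x * Y^m + x * \<delta>^m)"
      using st HH by (intro mult_left_mono add_left_mono) simp_all
    also have "\<dots> = Hp^(m-1) * x * (Y^m + \<delta>^m)" by (simp add: algebra_simps)
    also have "\<dots> \<le> Hp^(m-1) * x * (Y + \<delta>)^m"
    proof (rule mult_left_mono)
      obtain m' where "m = Suc m'" using m1 by (cases m) auto
      then show "Y^m + \<delta>^m \<le> (Y + \<delta>)^m" using pow_superadd[OF Y0 d0] by simp
      show "0 \<le> Hp^(m-1) * x" using HH x0 by simp
    qed
    also have "Y + \<delta> = real (Suc j + 1) * \<delta>" unfolding Y_def by (simp add: algebra_simps)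
    finally show ?case unfolding k_def[symmetric] m_def by simp
  qed
  have "e 0 \<le> Hp^(2^0 - 1) * x * (real (ell+1) * \<delta>)^(2^0)" using claim[of ell] by simp
  also have "\<dots> = real (ell+1) * (x * \<delta>)" by simp
  also have "x * \<delta> = 2 * (x / sqrt x) + 2 * x" unfolding \<delta>_def by (simp add: algebra_simps)
  also have "x / sqrt x = sqrt x" using x0 by (intro real_div_sqrt) simp
  finally show ?thesis unfolding x_def by simp
qed



lemma wavg_abs:
  fixes p d :: "'s::finite \<Rightarrow> real"
  assumes p0: "\<And>j. 0 \<le> p j"
  shows "\<bar>\<Sum>j\<in>UNIV. p j * d j\<bar> \<le> (\<Sum>j\<in>UNIV. p j * \<bar>d j\<bar>)"
proof -
  have "\<bar>\<Sum>j\<in>UNIV. p j * d j\<bar> \<le> (\<Sum>j\<in>UNIV. \<bar>p j * d j\<bar>)" by (rule sum_abs)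
  also have "\<dots> = (\<Sum>j\<in>UNIV. p j * \<bar>d j\<bar>)" using p0 by (simp add: abs_mult)
  finally show ?thesis .
qed

lemma wavg_le:
  fixes p d :: "'s::finite \<Rightarrow> real"
  assumes p0: "\<And>j. 0 \<le> p j" and p1: "(\<Sum>j\<in>UNIV. p j) = 1" and d: "\<And>j. d j \<le> c"
  shows "(\<Sum>j\<in>UNIV. p j * d j) \<le> c"
proof -
  have "(\<Sum>j\<in>UNIV. p j * d j) \<le> (\<Sum>j\<in>UNIV. p j * c)" using p0 d by (intro sum_mono mult_left_mono) auto
  also have "\<dots> = c" using p1 by (simp add: sum_distrib_right[symmetric])
  finally show ?thesis .
qed

lemma wavg_ge:
  fixes p d :: "'s::finite \<Rightarrow> real"
  assumes p0: "\<And>j. 0 \<le> p j" and p1: "(\<Sum>j\<in>UNIV. p j) = 1" and d: "\<And>j. c \<le> d j"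
  shows "c \<le> (\<Sum>j\<in>UNIV. p j * d j)"
proof -
  have "c = (\<Sum>j\<in>UNIV. p j * c)" using p1 by (simp add: sum_distrib_right[symmetric])
  also have "\<dots> \<le> (\<Sum>j\<in>UNIV. p j * d j)" using p0 d by (intro sum_mono mult_left_mono) auto
  finally show ?thesis .
qed

lemma var_expand:
  fixes p y :: "'s::finite \<Rightarrow> real"
  assumes p1: "(\<Sum>j\<in>UNIV. p j) = 1"
  shows "(\<Sum>j\<in>UNIV. p j * (y j - (\<Sum>i\<in>UNIV. p i * y i))^2) = (\<Sum>j\<in>UNIV. p j * (y j)^2) - (\<Sum>i\<in>UNIV. p i * y i)^2"
proof -
  define \<mu> where "\<mu> = (\<Sum>j\<in>UNIV. p j * y j)"
  have "(\<Sum>j\<in>UNIV. p j * (y j - \<mu>)^2) = (\<Sum>j\<in>UNIV. p j * (y j)^2 - 2 * \<mu> * (p j * y j) + \<mu>^2 * p j)"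
    by (rule sum.cong) (auto simp: power2_diff algebra_simps)
  also have "\<dots> = (\<Sum>j\<in>UNIV. p j * (y j)^2) - 2 * \<mu> * \<mu> + \<mu>^2 * 1"
    unfolding sum.distrib sum_subtractf sum_distrib_left[symmetric] p1 \<mu>_def ..
  finally show ?thesis unfolding \<mu>_def[symmetric] by (simp add: power2_eq_square)
qed

lemma step_bound:
  fixes M Mh :: "'s::finite \<Rightarrow> 's \<Rightarrow> real" and p hb :: "'s \<Rightarrow> real" and Hp A B :: real and k :: nat
  assumes M: "stoch M" and p0: "\<And>j. 0 \<le> p j" and p1: "(\<Sum>j\<in>UNIV. p j) = 1"
    and stat: "\<And>s'. (\<Sum>j\<in>UNIV. p j * Mh j s') = p s'"
    and hb0: "\<And>j. 0 \<le> hb j" and hbH: "\<And>j. hb j \<le> Hp"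
    and pois: "\<And>j. hb j - mvec M hb j \<le> 1"
    and A0: "0 \<le> A"
    and hyp: "\<And>j. \<bar>\<Sum>s'\<in>UNIV. (Mh j s' - M j s') * hb s' ^ (2^k)\<bar>
                 \<le> sqrt (A * varP M (\<lambda>s'. hb s' ^ (2^k)) j) + B"
  shows "\<bar>\<Sum>j\<in>UNIV. p j * (\<Sum>s'\<in>UNIV. (Mh j s' - M j s') * hb s' ^ (2^k))\<bar>
     \<le> sqrt (A * (\<bar>\<Sum>j\<in>UNIV. p j * (\<Sum>s'\<in>UNIV. (Mh j s' - M j s') * hb s' ^ (2^(Suc k)))\<bar>
                  + 2^(Suc k) * Hp^(2^(Suc k) - 1))) + B"
proof -
  define m :: nat where "m = 2^k"
  have m1: "m \<ge> 1" unfolding m_def by simp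
  define x where "x s' = hb s' ^ m" for s'
  define x2 where "x2 s' = hb s' ^ (2^(Suc k))" for s'
  have x2x: "x2 s' = (x s')^2" for s'
    unfolding x2_def x_def m_def by (simp add: power_mult[symmetric] mult.commute)
  define d where "d j = (\<Sum>s'\<in>UNIV. (Mh j s' - M j s') * x s')" for j
  define d2 where "d2 j = (\<Sum>s'\<in>UNIV. (Mh j s' - M j s') * x2 s')" for j
  define \<mu> where "\<mu> j = mvec M x j" for j
  define V where "V j = varP M x j" for j
  have M0: "0 \<le> M j s'" for j s' using M unfolding stoch_def by blast
  have M1: "(\<Sum>s'\<in>UNIV. M j s') = 1" for j using M unfolding stoch_def by blast
  have Hp0: "0 \<le> Hp" using hb0 hbH order_trans by blast
  have V0: "0 \<le> V j" for j unfolding V_def varP_def using M0 by (intro sum_nonneg) simp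
  have Vid: "V j = mvec M x2 j - (\<mu> j)^2" for j
    unfolding V_def varP_def \<mu>_def mvec_def x2x using var_expand[of "M j" x, OF M1] .
  have x0: "0 \<le> x j" and xH: "x j \<le> Hp^m" for j
    unfolding x_def using hb0 hbH by (simp_all add: power_mono)
  have mu0: "0 \<le> \<mu> j" for j unfolding \<mu>_def mvec_def using x0 by (intro wavg_ge[OF M0 M1]) simp
  have muH: "\<mu> j \<le> Hp^m" for j unfolding \<mu>_def mvec_def using xH by (intro wavg_le[OF M0 M1]) simp
  have pw: "x2 j - (\<mu> j)^2 \<le> 2 * real m * Hp^(2*m - 1)" for j
  proof -
    have mb0: "0 \<le> mvec M hb j" unfolding mvec_def using hb0 by (intro wavg_ge[OF M0 M1]) simp
    have "(mvec M hb j)^m \<le> \<mu> j"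
      unfolding \<mu>_def mvec_def x_def m_def using jensen_pow[where p="M j" and y=hb and k=k, OF M0 M1 hb0] .
    moreover have "hb j ^ m - (mvec M hb j)^m \<le> real m * Hp^(m-1)"
      using hb0[of j] hbH[of j] mb0 pois[of j] by (intro pow_diff_bound) simp_all
    ultimately have dm: "x j - \<mu> j \<le> real m * Hp^(m-1)" unfolding x_def by linarith
    have e: "x2 j - (\<mu> j)^2 = (x j - \<mu> j) * (x j + \<mu> j)" unfolding x2x by (simp add: power2_eq_square algebra_simps)
    show ?thesis
    proof (cases "x j - \<mu> j \<le> 0")
      case True
      then have "(x j - \<mu> j) * (x j + \<mu> j) \<le> 0" using x0[of j] mu0[of j] by (intro mult_nonpos_nonneg) simp_all
      moreover have "0 \<le> 2 * real m * Hp^(2*m - 1)" using Hp0 by simp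
      ultimately show ?thesis unfolding e by linarith
    next
      case False
      have "(x j - \<mu> j) * (x j + \<mu> j) \<le> (real m * Hp^(m-1)) * (2 * Hp^m)"
        using False dm x0[of j] mu0[of j] xH[of j] muH[of j] by (intro mult_mono) simp_all
      also have "\<dots> = 2 * real m * (Hp^(m-1) * Hp^m)" by simp
      also have "Hp^(m-1) * Hp^m = Hp^(2*m - 1)"
      proof -
        have "(m-1) + m = 2*m - 1" using m1 by simp
        then show ?thesis by (metis power_add)
      qed
      finally show ?thesis unfolding e .
    qed
  qed
  have pMh: "(\<Sum>j\<in>UNIV. p j * mvec Mh y j) = (\<Sum>j\<in>UNIV. p j * y j)" for y
  proof -
    have "(\<Sum>j\<in>UNIV. p j * mvec Mh y j) = (\<Sum>s'\<in>UNIV. \<Sum>j\<in>UNIV. p j * (Mh j s' * y s'))"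
      unfolding mvec_def swapL ..
    also have "\<dots> = (\<Sum>s'\<in>UNIV. (\<Sum>j\<in>UNIV. p j * Mh j s') * y s')"
      by (simp add: sum_distrib_right mult.assoc)
    also have "\<dots> = (\<Sum>j\<in>UNIV. p j * y j)" unfolding stat ..
    finally show ?thesis .
  qed
  have d2e: "d2 j = mvec Mh x2 j - mvec M x2 j" for j
    unfolding d2_def mvec_def by (simp add: left_diff_distrib sum_subtractf)
  have "(\<Sum>j\<in>UNIV. p j * V j) = (\<Sum>j\<in>UNIV. p j * (mvec Mh x2 j - d2 j)) - (\<Sum>j\<in>UNIV. p j * (\<mu> j)^2)"
    unfolding Vid d2e by (simp add: right_diff_distrib sum_subtractf)
  also have "\<dots> = (\<Sum>j\<in>UNIV. p j * (x2 j - (\<mu> j)^2)) - (\<Sum>j\<in>UNIV. p j * d2 j)"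
    using pMh[of x2] by (simp add: right_diff_distrib sum_subtractf)
  also have "\<dots> \<le> 2 * real m * Hp^(2*m - 1) + \<bar>\<Sum>j\<in>UNIV. p j * d2 j\<bar>"
    using wavg_le[where d="\<lambda>j. x2 j - (\<mu> j)^2", OF p0 p1 pw] abs_ge_minus_self[of "\<Sum>j\<in>UNIV. p j * d2 j"]
    by linarith
  finally have pV: "(\<Sum>j\<in>UNIV. p j * V j) \<le> \<bar>\<Sum>j\<in>UNIV. p j * d2 j\<bar> + 2 * real m * Hp^(2*m - 1)" by simp
  have "\<bar>\<Sum>j\<in>UNIV. p j * d j\<bar> \<le> (\<Sum>j\<in>UNIV. p j * \<bar>d j\<bar>)" by (rule wavg_abs[OF p0])
  also have "\<dots> \<le> (\<Sum>j\<in>UNIV. p j * (sqrt (A * V j) + B))"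
    using hyp p0 unfolding d_def V_def x_def m_def by (intro sum_mono mult_left_mono) auto
  also have "\<dots> = (\<Sum>j\<in>UNIV. p j * sqrt (A * V j)) + B"
    using p1 by (simp add: distrib_left sum.distrib sum_distrib_right[symmetric])
  also have "(\<Sum>j\<in>UNIV. p j * sqrt (A * V j)) \<le> sqrt (\<Sum>j\<in>UNIV. p j * (A * V j))"
    using A0 V0 by (intro jensen_sqrt[OF p0 p1]) simp
  also have "(\<Sum>j\<in>UNIV. p j * (A * V j)) = A * (\<Sum>j\<in>UNIV. p j * V j)"
    by (simp add: sum_distrib_left algebra_simps)
  also have "sqrt (A * (\<Sum>j\<in>UNIV. p j * V j)) \<le> sqrt (A * (\<bar>\<Sum>j\<in>UNIV. p j * d2 j\<bar> + 2 * real m * Hp^(2*m - 1)))"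
    using pV A0 by (intro real_sqrt_le_mono mult_left_mono) simp_all
  finally show ?thesis unfolding d_def d2_def x_def x2_def m_def by simp
qed


lemma stat_mvec:
  fixes Mh :: "'s::finite \<Rightarrow> 's \<Rightarrow> real" and p :: "'s \<Rightarrow> real"
  assumes stat: "\<And>s'. (\<Sum>j\<in>UNIV. p j * Mh j s') = p s'"
  shows "(\<Sum>j\<in>UNIV. p j * mvec Mh y j) = (\<Sum>j\<in>UNIV. p j * y j)"
proof -
  have "(\<Sum>j\<in>UNIV. p j * mvec Mh y j) = (\<Sum>s'\<in>UNIV. \<Sum>j\<in>UNIV. p j * (Mh j s' * y s'))"
    unfolding mvec_def swapL ..
  also have "\<dots> = (\<Sum>s'\<in>UNIV. (\<Sum>j\<in>UNIV. p j * Mh j s') * y s')"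
    by (simp add: sum_distrib_right mult.assoc)
  also have "\<dots> = (\<Sum>j\<in>UNIV. p j * y j)" unfolding stat ..
  finally show ?thesis .
qed

lemma mvec_bounds:
  fixes M :: "'s::finite \<Rightarrow> 's \<Rightarrow> real"
  assumes M: "stoch M" and "\<And>j. a \<le> x j" "\<And>j. x j \<le> b"
  shows "a \<le> mvec M x s" "mvec M x s \<le> b"
proof -
  have M0: "0 \<le> M s s'" for s' using M unfolding stoch_def by blast
  have M1: "(\<Sum>s'\<in>UNIV. M s s') = 1" using M unfolding stoch_def by blast
  show "a \<le> mvec M x s" unfolding mvec_def using assms(2) by (intro wavg_ge[OF M0 M1])
  show "mvec M x s \<le> b" unfolding mvec_def using assms(3) by (intro wavg_le[OF M0 M1])
qed

lemma base_bound:
  fixes M Mh :: "'s::finite \<Rightarrow> 's \<Rightarrow> real" and p hb :: "'s \<Rightarrow> real" and Hp :: real and m :: nat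
  assumes M: "stoch M" and Mh: "stoch Mh" and p0: "\<And>j. 0 \<le> p j" and p1: "(\<Sum>j\<in>UNIV. p j) = 1"
    and hb0: "\<And>j. 0 \<le> hb j" and hbH: "\<And>j. hb j \<le> Hp"
  shows "\<bar>\<Sum>j\<in>UNIV. p j * (\<Sum>s'\<in>UNIV. (Mh j s' - M j s') * hb s' ^ m)\<bar> \<le> Hp^m"
proof -
  define x where "x s' = hb s' ^ m" for s'
  have x0: "0 \<le> x j" and xH: "x j \<le> Hp^m" for j
    unfolding x_def using hb0 hbH by (simp_all add: power_mono)
  have de: "(\<Sum>s'\<in>UNIV. (Mh j s' - M j s') * x s') = mvec Mh x j - mvec M x j" for j
    unfolding mvec_def by (simp add: left_diff_distrib sum_subtractf)
  have db: "\<bar>mvec Mh x j - mvec M x j\<bar> \<le> Hp^m" for j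
    using mvec_bounds[where x=x and a=0 and b="Hp^m" and s=j, OF Mh x0 xH] mvec_bounds[where x=x and a=0 and b="Hp^m" and s=j, OF M x0 xH] by (simp add: abs_le_iff)
  have "\<bar>\<Sum>j\<in>UNIV. p j * (mvec Mh x j - mvec M x j)\<bar> \<le> (\<Sum>j\<in>UNIV. p j * \<bar>mvec Mh x j - mvec M x j\<bar>)"
    by (rule wavg_abs[OF p0])
  also have "\<dots> \<le> Hp^m" using db by (intro wavg_le[OF p0 p1])
  finally show ?thesis unfolding de[symmetric] x_def .
qed

lemma stoch_Ppi:
  assumes "stoch_kernel P" "policy pol"
  shows "stoch (Ppi P pol)"
proof -
  have P0: "0 \<le> P s a s'" for s a s' using assms(1) unfolding stoch_kernel_def by blast
  have P1: "(\<Sum>s'\<in>UNIV. P s a s') = 1" for s a using assms(1) unfolding stoch_kernel_def by blast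
  have q0: "0 \<le> pol s a" for s a using assms(2) unfolding policy_def by blast
  have q1: "(\<Sum>a\<in>UNIV. pol s a) = 1" for s using assms(2) unfolding policy_def by blast
  have "0 \<le> Ppi P pol s s'" for s s' unfolding Ppi_def using P0 q0 by (intro sum_nonneg) simp
  moreover have "(\<Sum>s'\<in>UNIV. Ppi P pol s s') = 1" for s
  proof -
    have "(\<Sum>s'\<in>UNIV. Ppi P pol s s') = (\<Sum>a\<in>UNIV. pol s a * (\<Sum>s'\<in>UNIV. P s a s'))"
      unfolding Ppi_def sum_distrib_left by (rule sum.swap)
    also have "\<dots> = 1" using q1 by (simp add: P1)
    finally show ?thesis .
  qed
  ultimately show ?thesis unfolding stoch_def by blast
qed

theorem mainTheorem17:
  fixes P Phat :: "'s::finite \<Rightarrow> 'a::finite \<Rightarrow> 's \<Rightarrow> real"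
    and r :: "'s \<Rightarrow> 'a \<Rightarrow> real"
    and pol :: "'s \<Rightarrow> 'a \<Rightarrow> real"
    and n :: nat and \<alpha> :: real
  assumes "stoch_kernel P" and "stoch_kernel Phat"
    and "\<And>s a. 0 \<le> r s a \<and> r s a \<le> 1"
    and "n > 0"
    and "policy pol"
    and "\<exists>c. \<forall>s. gain P r pol s = c"
    and "\<alpha> > 0"
  defines "hbar \<equiv> (\<lambda>s. bias P r pol s - Min (range (bias P r pol)))"
    and "ell \<equiv> nat \<lceil>log 2 (log 2 (supnorm (\<lambda>s. bias P r pol s - Min (range (bias P r pol))) + 4))\<rceil>"
  assumes "\<And>k s. k \<le> ell \<Longrightarrow>
      \<bar>(\<Sum>s'\<in>UNIV. (Ppi Phat pol s s' - Ppi P pol s s') * hbar s' ^ (2 ^ k))\<bar>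
        \<le> sqrt (\<alpha> * varP (Ppi P pol) (\<lambda>s'. hbar s' ^ (2 ^ k)) s / real n)
           + \<alpha> * 2 ^ k / real n * (supnorm hbar + 1) ^ (2 ^ k)"
  shows "supnorm (\<lambda>s. gain Phat r pol s - gain P r pol s)
    \<le> 2 * (real ell + 1) * sqrt (\<alpha> * (supnorm hbar + 1) / real n)
       + (real ell + 1) * (2 * \<alpha> / real n) * (supnorm hbar + 1)"
proof -
  define M where "M = Ppi P pol"
  define Mh where "Mh = Ppi Phat pol"
  define rp where "rp = rpi r pol"
  have stM: "stoch M" unfolding M_def using stoch_Ppi assms(1,5) by blast
  have stMh: "stoch Mh" unfolding Mh_def using stoch_Ppi assms(2,5) by blast
  have q0: "\<And>s a. 0 \<le> pol s a" and q1: "\<And>s. (\<Sum>a\<in>UNIV. pol s a) = 1"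
    using assms(5) unfolding policy_def by blast+
  have rp0: "0 \<le> rp s" and rp1: "rp s \<le> 1" for s
    unfolding rp_def rpi_def using assms(3) by (auto intro!: wavg_ge[OF q0 q1] wavg_le[OF q0 q1])
  obtain c where c: "\<And>s. gain P r pol s = c" using assms(6) by blast
  have gainP: "gain P r pol s = mvec (Pinf M) rp s" for s unfolding gain_def M_def rp_def ..
  have gainPh: "gain Phat r pol s = mvec (Pinf Mh) rp s" for s unfolding gain_def Mh_def rp_def ..
  have stPi: "stoch (Pinf M)" and stPih: "stoch (Pinf Mh)"
    using Pinf_props(1)[OF stM] Pinf_props(1)[OF stMh] .
  have gb: "0 \<le> gain X r pol s \<and> gain X r pol s \<le> 1" if "stoch (Pinf (Ppi X pol))" for X s
    unfolding gain_def using mvec_bounds[OF that, of 0 "rpi r pol" 1 s] rp0 rp1 unfolding rp_def by simp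
  have c01: "0 \<le> c" "c \<le> 1" using gb[of P] stPi c unfolding M_def by auto
  define h where "h = bias P r pol"
  have hpois: "c + h s = rp s + mvec M h s" for s
  proof -
    have hh: "(\<lambda>s. cesaro_lim (\<lambda>T. \<Sum>t<T. mvec (mpow M t) rp s - mvec (Pinf M) rp s)) = h"
      unfolding h_def bias_def gain_def M_def rp_def ..
    have hs: "cesaro_lim (\<lambda>T. \<Sum>t<T. mvec (mpow M t) rp s' - mvec (Pinf M) rp s') = h s'" for s'
      using fun_cong[OF hh, of s'] by simp
    have "mvec (Pinf M) rp s + h s = rp s + mvec M h s"
      using poisson[OF stM, of rp s] unfolding hs by simp
    moreover have "mvec (Pinf M) rp s = c" using c[of s] gainP[of s] by simp
    ultimately show ?thesis by simp
  qed
  define m0 where "m0 = Min (range h)"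
  have hbar_eq: "hbar = (\<lambda>s. h s - m0)" unfolding hbar_def h_def m0_def ..
  have hb0: "0 \<le> hbar j" for j unfolding hbar_eq m0_def by (simp add: Min_le)
  have Mhb: "mvec M hbar s = mvec M h s - m0" for s
    unfolding hbar_eq mvec_diff mvec_const[OF stM] ..
  have pois: "hbar j - mvec M hbar j = rp j - c" for j unfolding Mhb using hpois[of j] unfolding hbar_eq by simp
  define H where "H = supnorm hbar"
  have hbH0: "hbar j \<le> H" for j
  proof -
    have "\<bar>hbar j\<bar> \<le> H" unfolding H_def supnorm_def by (rule Max_ge) auto
    then show ?thesis by simp
  qed
  have H0: "0 \<le> H" using hb0 hbH0 order_trans by blast
  define Hp where "Hp = H + 1"
  have Hp1: "Hp \<ge> 1" unfolding Hp_def using H0 by simp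
  have hbH: "hbar j \<le> Hp" for j using hbH0[of j] unfolding Hp_def by simp
  define L where "L = log 2 (H + 4)"
  have ell_eq: "ell = nat \<lceil>log 2 L\<rceil>" unfolding ell_def L_def H_def hbar_def ..
  have L2: "L \<ge> 2"
  proof -
    have "log 2 4 \<le> log 2 (H + 4)" using H0 by simp
    moreover have "log 2 (4::real) = 2"
      using log_pow_cancel[of 2 2] by simp
    ultimately show ?thesis unfolding L_def by simp
  qed
  have logL1: "log 2 L \<ge> 1" using L2 by simp
  have ell1: "ell \<ge> 1" unfolding ell_eq using logL1 by linarith
  have "log 2 L \<le> real ell" unfolding ell_eq using logL1 by linarith
  then have "2 powr (log 2 L) \<le> 2 powr (real ell)" by (intro powr_mono) simp_all
  then have "L \<le> 2^ell" using L2 by (simp add: powr_realpow)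
  then have "2 powr L \<le> 2 powr (real (2^ell))" by (intro powr_mono) simp_all
  moreover have "(2::real) powr (real (2^ell)) = 2^(2^ell)" by (rule powr_realpow) simp
  moreover have "2 powr L = H + 4" unfolding L_def using H0 by simp
  ultimately have "H + 4 \<le> 2^(2^ell)" by simp
  then have Hpb: "Hp \<le> 2^(2^ell)" unfolding Hp_def by simp
  define A where "A = \<alpha> / real n"
  have A0: "A > 0" unfolding A_def using assms(4,7) by simp
  have A0': "0 \<le> A" using A0 by simp
  have poisj: "hbar j - mvec M hbar j \<le> 1" for j using pois[of j] rp1[of j] c01 by linarith
  have main: "\<bar>gain Phat r pol s - gain P r pol s\<bar> \<le> real (ell+1) * (2 * sqrt (A * Hp) + 2 * (A * Hp))" for s
  proof -
    define p where "p j = Pinf Mh s j" for j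
    have p0: "0 \<le> p j" for j unfolding p_def using stPih unfolding stoch_def by blast
    have p1: "(\<Sum>j\<in>UNIV. p j) = 1" unfolding p_def using stPih unfolding stoch_def by blast
    have stat: "(\<Sum>j\<in>UNIV. p j * Mh j s') = p s'" for s'
      using fun_cong[OF fun_cong[OF Pinf_props(2)[OF stMh], of s], of s'] unfolding mmul_def p_def .
    define e where "e k = \<bar>\<Sum>j\<in>UNIV. p j * (\<Sum>s'\<in>UNIV. (Mh j s' - M j s') * hbar s' ^ (2^k))\<bar>" for k
    have diff: "\<bar>gain Phat r pol s - gain P r pol s\<bar> = e 0"
    proof -
      have "gain Phat r pol s = (\<Sum>j\<in>UNIV. p j * rp j)" unfolding gainPh mvec_def p_def ..
      also have "\<dots> = (\<Sum>j\<in>UNIV. p j * (c + (hbar j - mvec M hbar j)))" unfolding pois by simp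
      also have "\<dots> = c + (\<Sum>j\<in>UNIV. p j * hbar j) - (\<Sum>j\<in>UNIV. p j * mvec M hbar j)"
        using p1 by (simp add: distrib_left right_diff_distrib sum.distrib sum_subtractf sum_distrib_right[symmetric])
      also have "(\<Sum>j\<in>UNIV. p j * hbar j) = (\<Sum>j\<in>UNIV. p j * mvec Mh hbar j)"
        using stat_mvec[OF stat] by simp
      finally have "gain Phat r pol s - gain P r pol s = (\<Sum>j\<in>UNIV. p j * (mvec Mh hbar j - mvec M hbar j))"
        using c[of s] by (simp add: right_diff_distrib sum_subtractf)
      moreover have "mvec Mh hbar j - mvec M hbar j = (\<Sum>s'\<in>UNIV. (Mh j s' - M j s') * hbar s' ^ (2^0))" for j
        unfolding mvec_def by (simp add: left_diff_distrib sum_subtractf)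
      ultimately show ?thesis unfolding e_def by simp
    qed
    show ?thesis
    proof (cases "A * Hp < 1/4")
      case False
      have "\<bar>gain Phat r pol s - gain P r pol s\<bar> \<le> 1"
        using gb[of Phat s] gb[of P s] stPi stPih unfolding M_def Mh_def by (simp add: abs_le_iff)
      also have "1 \<le> real (ell+1) * (2 * sqrt (A * Hp))"
      proof -
        have "sqrt (1/4) \<le> sqrt (A * Hp)" using False by (intro real_sqrt_le_mono) simp
        moreover have "sqrt (1/4::real) = 1/2" by (simp add: real_sqrt_divide)
        ultimately have "1 \<le> 2 * sqrt (A * Hp)" by simp
        moreover have "1 \<le> real (ell+1)" by simp
        ultimately show ?thesis using mult_mono[of 1 "real (ell+1)" 1 "2 * sqrt (A * Hp)"] by simp
      qed
      also have "\<dots> \<le> real (ell+1) * (2 * sqrt (A * Hp) + 2 * (A * Hp))"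
        using A0 Hp1 by (intro mult_left_mono) simp_all
      finally show ?thesis .
    next
      case True
      have "e 0 \<le> real (ell+1) * (2 * sqrt (A * Hp) + 2 * (A * Hp))"
      proof (rule recursion_final[OF A0 Hp1 True ell1 Hpb])
        show "e ell \<le> Hp^(2^ell)" unfolding e_def by (rule base_bound[OF stM stMh p0 p1 hb0 hbH])
        fix k assume k: "k < ell"
        have hyp: "\<bar>\<Sum>s'\<in>UNIV. (Mh j s' - M j s') * hbar s' ^ (2^k)\<bar>
                 \<le> sqrt (A * varP M (\<lambda>s'. hbar s' ^ (2^k)) j) + A * 2^k * Hp^(2^k)" for j
          using assms(10)[of k j] k unfolding M_def[symmetric] Mh_def[symmetric] A_def Hp_def H_def
          by (simp add: times_divide_eq_left mult.commute mult.left_commute)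
        show "e k \<le> sqrt (A * (e (Suc k) + 2^(Suc k) * Hp^(2^(Suc k) - 1))) + A * 2^k * Hp^(2^k)"
          unfolding e_def
          by (rule step_bound[OF stM p0 p1 stat hb0 hbH poisj A0' hyp])
      qed
      then show ?thesis using diff by simp
    qed
  qed
  have fin: "finite (range (\<lambda>s. \<bar>gain Phat r pol s - gain P r pol s\<bar>))" by simp
  have "supnorm (\<lambda>s. gain Phat r pol s - gain P r pol s) \<le> real (ell+1) * (2 * sqrt (A * Hp) + 2 * (A * Hp))"
    unfolding supnorm_def using main by (subst Max_le_iff[OF fin]) auto
  also have "\<dots> = 2 * (real ell + 1) * sqrt (\<alpha> * (supnorm hbar + 1) / real n)
       + (real ell + 1) * (2 * \<alpha> / real n) * (supnorm hbar + 1)"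
    unfolding A_def Hp_def H_def by (simp add: algebra_simps)
  finally show ?thesis .
qed


end
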